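(* Let $p\ge2$ and $n,\ell,t$ be positive integers with $n>\ell$. For each $0\le r\le n-\ell$ let $\xi_r$ be a prime with $\max(t,r)<\xi_r\le2\max(t,r)$, and let $\mathbf{a}_r^*\in\{0,\dots,\xi_r-1\}^t$ maximize $|\mathcal{C}_{p,t,\ell}(n-\ell,r,\mathbf{a},\xi_r)|$ over $\mathbf{a}\in\{0,\dots,\xi_r-1\}^t$. Define $$\mathcal{C}^1=\bigl\{\phi^{-1}(\mathbf{y},\mathbf{z}):\ \mathbf{y}\in\mathbb{Z}_p^\ell,\ \mathbf{z}\in\mathcal{C}_{p,t,\ell}(n-\ell,r,\mathbf{a}_r^*,\xi_r)\text{ where }r=\mathrm{wt}_H(\mathbf{z})\bigr\}.$$ Then $$|\mathcal{C}^1|\ge p^\ell\sum_{r=0}^{n-\ell}\frac{\binom{n-\ell}{r}(p-1)^r}{(2\max(t,r))^t}.$$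
   Context: $\mathbb{Z}_p=\{0,1,\dots,p-1\}$ with arithmetic mod $p$. The bijection $\phi:\mathbb{Z}_p^n\to\mathbb{Z}_p^\ell\times\mathbb{Z}_p^{n-\ell}$ is $\phi(\mathbf{x})=(\mathbf{y},\mathbf{z})$ with $\mathbf{y}=(x_1,\dots,x_\ell)$ and $z_i=x_{i+\ell}-x_i$ for $1\le i\le n-\ell$. Any $\mathbf{z}\in\mathbb{Z}_p^m$ of Hamming weight $r$ is written uniquely as $\mathbf{z}=0^{b_1}u_10^{b_2}u_2\cdots u_r0^{b_{r+1}}$ with $u_i\ne0$, $b_i\ge0$. For a prime $\xi$ and $\mathbf{a}\in\{0,\dots,\xi-1\}^t$, $$\mathcal{C}_{p,t,\ell}(m,r,\mathbf{a},\xi)=\Bigl\{\mathbf{z}\in\mathbb{Z}_p^m:\ \mathrm{wt}_H(\mathbf{z})=r,\ \sum_{i=1}^{r+1}i^q\Bigl\lfloor\frac{b_i}{\ell}\Bigr\rfloor\equiv a_q\pmod{\xi}\ \forall\,1\le q\le t\Bigr\}.$$ *)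

theory Defs
  imports "HOL-Number_Theory.Number_Theory"
begin

definition Zp_vecs :: "nat \<Rightarrow> nat \<Rightarrow> nat list set" where
  "Zp_vecs p m = {x. length x = m \<and> set x \<subseteq> {..<p}}"

definition wtH :: "nat list \<Rightarrow> nat" where
  "wtH z = length (filter (\<lambda>x. x \<noteq> 0) z)"

definition phi :: "nat \<Rightarrow> nat \<Rightarrow> nat list \<Rightarrow> nat list \<times> nat list" where
  "phi p l x = (take l x, map (\<lambda>i. (x ! (i + l) + p - x ! i) mod p) [0..<length x - l])"

text \<open>Zero run lengths: z = 0^{b_1} u_1 0^{b_2} ... u_r 0^{b_{r+1}} gives [b_1,...,b_{r+1}].\<close>
fun zero_runs :: "nat list \<Rightarrow> nat list" where
  "zero_runs [] = [0]"
| "zero_runs (x # xs) =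
     (if x = 0 then (case zero_runs xs of [] \<Rightarrow> [1] | b # bs \<Rightarrow> Suc b # bs)
      else 0 # zero_runs xs)"

text \<open>The code C_{p,t,l}(m,r,a,xi); a = [a_1,...,a_t] is a list, a_q = a!(q-1).\<close>
definition codeC :: "nat \<Rightarrow> nat \<Rightarrow> nat \<Rightarrow> nat \<Rightarrow> nat \<Rightarrow> nat list \<Rightarrow> nat \<Rightarrow> nat list set" where
  "codeC p t l m r a \<xi> = {z \<in> Zp_vecs p m. wtH z = r \<and>
     (\<forall>q\<in>{1..t}. [(\<Sum>i<r+1. (i+1)^q * (zero_runs z ! i div l)) = a ! (q - 1)] (mod \<xi>))}"

definition param_vecs :: "nat \<Rightarrow> nat \<Rightarrow> nat list set" where
  "param_vecs t \<xi> = {a. length a = t \<and> set a \<subseteq> {..<\<xi>}}"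

end

theory Submission
  imports Defs
begin

lemma Zp_fin: "finite (Zp_vecs p m)"
  unfolding Zp_vecs_def using finite_lists_length_eq[of "{..<p}" m] by (simp add: conj_commute)

lemma Zp_card: "card (Zp_vecs p m) = p ^ m"
  unfolding Zp_vecs_def using card_lists_length_eq[of "{..<p}" m] by (simp add: conj_commute)

lemma wtH_le: "wtH z \<le> length z"
  unfolding wtH_def by simp

lemma wtH_Cons: "wtH (u # z) = (if u = 0 then wtH z else Suc (wtH z))"
  unfolding wtH_def by simp

definition W :: "nat \<Rightarrow> nat \<Rightarrow> nat \<Rightarrow> nat list set" where
  "W p m r = {z \<in> Zp_vecs p m. wtH z = r}"

lemma W_fin: "finite (W p m r)" unfolding W_def using Zp_fin by simp

lemma W_card: "p \<ge> 1 \<Longrightarrow> card (W p m r) = (m choose r) * (p-1)^r"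
proof (induction m arbitrary: r)
  case 0
  have "W p 0 r = (if r = 0 then {[]} else {})"
    by (auto simp: W_def Zp_vecs_def wtH_def)
  then show ?case by simp
next
  case (Suc m)
  show ?case
  proof (cases r)
    case 0
    have "W p (Suc m) 0 = Cons 0 ` W p m 0"
      using Suc.prems by (auto simp: W_def Zp_vecs_def wtH_Cons length_Suc_conv split: if_splits)
    then show ?thesis using Suc 0 by (simp add: card_image)
  next
    case (Suc k)
    have eq: "W p (Suc m) (Suc k) = Cons 0 ` W p m (Suc k) \<union> (\<lambda>(u,z). u#z) ` ({1..<p} \<times> W p m k)"
      using Suc.prems
      by (auto simp: W_def Zp_vecs_def wtH_Cons length_Suc_conv image_iff split: if_splits)
    have c2: "card ((\<lambda>(u,z). u#z) ` ({1..<p} \<times> W p m k)) = (p-1) * card (W p m k)"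
      by (subst card_image) (auto simp: inj_on_def card_cartesian_product)
    have "card (W p (Suc m) (Suc k)) = card (W p m (Suc k)) + (p-1) * card (W p m k)"
      unfolding eq
    proof (subst card_Un_disjoint)
      show "finite (Cons 0 ` W p m (Suc k))" using W_fin by simp
      show "finite ((\<lambda>(u,z). u#z) ` ({1..<p} \<times> W p m k))" using W_fin by simp
      show "Cons 0 ` W p m (Suc k) \<inter> (\<lambda>(u,z). u#z) ` ({1..<p} \<times> W p m k) = {}" by auto
      show "card (Cons 0 ` W p m (Suc k)) + card ((\<lambda>(u,z). u#z) ` ({1..<p} \<times> W p m k)) =
            card (W p m (Suc k)) + (p - 1) * card (W p m k)" using c2 by (simp add: card_image)
    qed
    also have "\<dots> = ((m choose Suc k) + (m choose k)) * (p-1)^Suc k"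
      using Suc.IH Suc.prems by (simp add: algebra_simps)
    finally show ?thesis using Suc by simp
  qed
qed


lemma param_card: "card (param_vecs t x) = x ^ t"
  unfolding param_vecs_def using card_lists_length_eq[of "{..<x}" t] by (simp add: conj_commute)

lemma param_fin: "finite (param_vecs t x)"
  unfolding param_vecs_def using finite_lists_length_eq[of "{..<x}" t] by (simp add: conj_commute)

lemma pigeon:
  assumes xpos: "x > 0" and ast: "astar \<in> param_vecs t x"
    and mx: "\<forall>a\<in>param_vecs t x. card (codeC p t l m r a x) \<le> card (codeC p t l m r astar x)"
  shows "card (W p m r) \<le> x ^ t * card (codeC p t l m r astar x)"
proof -
  define S where "S z q = (\<Sum>i<r+1. (i+1)^q * (zero_runs z ! i div l))" for z q
  define f where "f z = map (\<lambda>q. S z q mod x) [1..<t+1]" for z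
  have fin: "finite (W p m r)" by (rule W_fin)
  have img: "f ` W p m r \<subseteq> param_vecs t x"
    using xpos by (auto simp: f_def param_vecs_def)
  have sub: "{z \<in> W p m r. f z = a} \<subseteq> codeC p t l m r a x" for a
  proof
    fix z assume z: "z \<in> {z \<in> W p m r. f z = a}"
    then have a: "a = f z" and zW: "z \<in> W p m r" by auto
    have "[S z q = a ! (q - 1)] (mod x)" if "q \<in> {1..t}" for q
    proof -
      have "a ! (q - 1) = S z q mod x" using that unfolding a f_def
        by (subst nth_map) (auto simp del: upt_Suc)
      then show ?thesis by (simp add: cong_def)
    qed
    then show "z \<in> codeC p t l m r a x" using zW unfolding codeC_def W_def S_def by auto
  qed
  have "card (W p m r) = card (\<Union>a\<in>f ` W p m r. {z \<in> W p m r. f z = a})"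
    by (rule arg_cong[where f=card]) auto
  also have "\<dots> = (\<Sum>a\<in>f ` W p m r. card {z \<in> W p m r. f z = a})"
    by (rule card_UN_disjoint) (use fin in auto)
  also have "\<dots> \<le> (\<Sum>a\<in>f ` W p m r. card (codeC p t l m r astar x))"
  proof (rule sum_mono)
    fix a assume "a \<in> f ` W p m r"
    then have "a \<in> param_vecs t x" using img by auto
    moreover have "finite (codeC p t l m r a x)"
      unfolding codeC_def using Zp_fin by simp
    ultimately show "card {z \<in> W p m r. f z = a} \<le> card (codeC p t l m r astar x)"
      using card_mono[OF _ sub[of a]] mx by (meson le_trans)
  qed
  also have "\<dots> = card (f ` W p m r) * card (codeC p t l m r astar x)" by simp
  also have "\<dots> \<le> x ^ t * card (codeC p t l m r astar x)"
    using card_mono[OF param_fin img] param_card by (simp add: mult_right_mono)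
  finally show ?thesis .
qed


lemma modcancel:
  fixes a b c p :: nat
  assumes "a < p" "b < p" "c < p" "(a + p - c) mod p = (b + p - c) mod p"
  shows "a = b"
proof -
  have "[a + (p - c) = b + (p - c)] (mod p)" using assms by (simp add: cong_def)
  then have "[a = b] (mod p)" using cong_add_rcancel_nat by blast
  then show ?thesis using assms by (simp add: cong_def)
qed

lemma phi_inj: assumes lpos: "l > 0" shows "inj_on (phi p l) (Zp_vecs p n)"
proof (rule inj_onI)
  fix x x' assume x: "x \<in> Zp_vecs p n" and x': "x' \<in> Zp_vecs p n" and e: "phi p l x = phi p l x'"
  have lx: "length x = n" and lx': "length x' = n" using x x' by (auto simp: Zp_vecs_def)
  have bx: "x ! j < p" if "j < n" for j using x that nth_mem by (fastforce simp: Zp_vecs_def)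
  have bx': "x' ! j < p" if "j < n" for j using x' that nth_mem by (fastforce simp: Zp_vecs_def)
  have tk: "take l x = take l x'" and mp: "map (\<lambda>i. (x ! (i + l) + p - x ! i) mod p) [0..<n - l]
       = map (\<lambda>i. (x' ! (i + l) + p - x' ! i) mod p) [0..<n - l]"
    using e lx lx' by (auto simp: phi_def)
  have "\<forall>j. j < n \<longrightarrow> x ! j = x' ! j"
  proof (intro allI)
    fix j show "j < n \<longrightarrow> x ! j = x' ! j"
    proof (induction j rule: less_induct)
      case (less j)
      show ?case
      proof
        assume jn: "j < n"
        show "x ! j = x' ! j"
        proof (cases "j < l")
          case True
          then show ?thesis using tk by (metis nth_take)
        next
          case False
          define i where "i = j - l"
          have ji: "j = i + l" and il: "i < n - l" using False jn by (auto simp: i_def)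
          have "(x ! (i + l) + p - x ! i) mod p = (x' ! (i + l) + p - x' ! i) mod p"
            using arg_cong[OF mp, of "\<lambda>L. L ! i"] il by simp
          moreover have "x ! i = x' ! i" using less.IH[of i] ji jn lpos by simp
          ultimately show ?thesis using ji jn bx bx' il
            by (metis modcancel less_imp_le_nat le_add_diff_inverse2 add_lessD1 add.commute)
        qed
      qed
    qed
  qed
  then show "x = x'" using lx lx' by (simp add: nth_equalityI)
qed

function build :: "nat \<Rightarrow> nat \<Rightarrow> nat list \<Rightarrow> nat list \<Rightarrow> nat \<Rightarrow> nat" where
  "build p l y z j = (if j < l \<or> l = 0 then y ! j else (z ! (j - l) + build p l y z (j - l)) mod p)"
  by auto
termination by (relation "measure (\<lambda>(p,l,y,z,j). j)") auto

declare build.simps[simp del]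

lemma build_lt: "y \<in> Zp_vecs p l \<Longrightarrow> p > 0 \<Longrightarrow> l > 0 \<Longrightarrow> build p l y z j < p"
proof (induction j rule: less_induct)
  case (less j)
  then show ?case
  proof (cases "j < l \<or> l = 0")
    case True
    then have jl: "j < length y" using less.prems by (simp add: Zp_vecs_def)
    then have "y ! j \<in> set y" by (rule nth_mem)
    then have "y ! j < p" using less.prems by (auto simp: Zp_vecs_def)
    then show ?thesis using True
      by (subst build.simps) simp
  next
    case False
    then show ?thesis using less.prems by (subst build.simps) auto
  qed
qed

lemma phi_surj:
  assumes "p > 0" "l > 0" "l \<le> n" "y \<in> Zp_vecs p l" "z \<in> Zp_vecs p (n - l)"
  shows "(y, z) \<in> phi p l ` Zp_vecs p n"
proof -
  define x where "x = map (build p l y z) [0..<n]"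
  have ly: "length y = l" and lz: "length z = n - l"
    using assms by (simp_all add: Zp_vecs_def)
  have bz: "z ! i < p" if "i < n - l" for i
  proof -
    have "z ! i \<in> set z" using that lz by (simp add: nth_mem)
    then show ?thesis using assms by (auto simp: Zp_vecs_def)
  qed
  have xZ: "x \<in> Zp_vecs p n" using build_lt assms by (auto simp: x_def Zp_vecs_def)
  have "take l x = y"
    by (rule nth_equalityI) (use ly assms in \<open>auto simp: x_def build.simps\<close>)
  moreover have "map (\<lambda>i. (x ! (i + l) + p - x ! i) mod p) [0..<length x - l] = z"
  proof (rule nth_equalityI)
    show "length (map (\<lambda>i. (x ! (i + l) + p - x ! i) mod p) [0..<length x - l]) = length z"
      using lz by (simp add: x_def)
    fix i assume "i < length (map (\<lambda>i. (x ! (i + l) + p - x ! i) mod p) [0..<length x - l])"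
    then have il: "i < n - l" by (simp add: x_def)
    define c where "c = build p l y z i"
    have c: "c < p" using build_lt assms c_def by simp
    have "x ! (i + l) = (z ! i + c) mod p" using il assms
      unfolding x_def c_def by (simp add: build.simps[of p l y z "i+l"])
    moreover have "x ! i = c" using il unfolding x_def c_def by simp
    ultimately have "(x ! (i + l) + p - x ! i) = (z ! i + c) mod p + p - c" by simp
    moreover have "((z ! i + c) mod p + p - c) mod p = z ! i"
    proof -
      have "[(z ! i + c) mod p + (p - c) = z ! i + c + (p - c)] (mod p)"
        by (simp add: cong_def mod_add_left_eq)
      also have "z ! i + c + (p - c) = z ! i + p" using c by simp
      finally have "[(z ! i + c) mod p + (p - c) = z ! i] (mod p)" by (simp add: cong_def)
      then show ?thesis using c bz[OF il] by (simp add: cong_def)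
    qed
    ultimately show "map (\<lambda>i. (x ! (i + l) + p - x ! i) mod p) [0..<length x - l] ! i = z ! i"
      using il by (simp add: x_def)
  qed
  ultimately have "phi p l x = (y, z)" by (simp add: phi_def)
  then show ?thesis using xZ by force
qed


theorem lemma5:
  fixes p n l t :: nat and \<xi> :: "nat \<Rightarrow> nat" and astar :: "nat \<Rightarrow> nat list"
  assumes "p \<ge> 2" and "n > l" and "l > 0" and "t > 0"
    and "\<forall>r\<le>n-l. prime (\<xi> r) \<and> max t r < \<xi> r \<and> \<xi> r \<le> 2 * max t r"
    and "\<forall>r\<le>n-l. astar r \<in> param_vecs t (\<xi> r) \<and>
           (\<forall>a\<in>param_vecs t (\<xi> r). card (codeC p t l (n-l) r a (\<xi> r))
                                   \<le> card (codeC p t l (n-l) r (astar r) (\<xi> r)))"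
  shows "real (card ((\<lambda>(y, z). the_inv_into (Zp_vecs p n) (phi p l) (y, z)) `
             {(y, z). y \<in> Zp_vecs p l \<and> z \<in> codeC p t l (n-l) (wtH z) (astar (wtH z)) (\<xi> (wtH z))}))
         \<ge> real p ^ l * (\<Sum>r=0..n-l. real ((n-l) choose r) * real (p-1) ^ r / real (2 * max t r) ^ t)"
proof -
  define m where "m = n - l"
  define C where "C r = codeC p t l m r (astar r) (\<xi> r)" for r
  define Z where "Z = {z. z \<in> C (wtH z)}"
  define g where "g = (\<lambda>(y, z). the_inv_into (Zp_vecs p n) (phi p l) (y, z))"
  have SZ: "{(y, z). y \<in> Zp_vecs p l \<and> z \<in> codeC p t l (n-l) (wtH z) (astar (wtH z)) (\<xi> (wtH z))}
      = Zp_vecs p l \<times> Z" by (auto simp: Z_def C_def m_def)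
  have ZU: "Z = (\<Union>r\<in>{0..m}. C r)"
  proof
    show "Z \<subseteq> (\<Union>r\<in>{0..m}. C r)"
    proof
      fix z assume "z \<in> Z"
      then have "z \<in> C (wtH z)" by (simp add: Z_def)
      moreover then have "wtH z \<le> m" using wtH_le[of z] by (auto simp: C_def codeC_def Zp_vecs_def)
      ultimately show "z \<in> (\<Union>r\<in>{0..m}. C r)" by auto
    qed
    show "(\<Union>r\<in>{0..m}. C r) \<subseteq> Z" by (auto simp: Z_def C_def codeC_def)
  qed
  have Cfin: "finite (C r)" for r unfolding C_def codeC_def using Zp_fin by simp
  have ZZp: "Z \<subseteq> Zp_vecs p m" unfolding ZU by (auto simp: C_def codeC_def)
  have cardZ: "card Z = (\<Sum>r=0..m. card (C r))"
    unfolding ZU by (rule card_UN_disjoint) (simp, simp add: Cfin, auto simp: C_def codeC_def)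
  have inj: "inj_on g (Zp_vecs p l \<times> Z)"
  proof (rule inj_onI)
    fix a b assume a: "a \<in> Zp_vecs p l \<times> Z" and b: "b \<in> Zp_vecs p l \<times> Z" and e: "g a = g b"
    have "a \<in> phi p l ` Zp_vecs p n" "b \<in> phi p l ` Zp_vecs p n"
      using a b ZZp phi_surj[of p l n] assms(1,2,3) by (auto simp: m_def)
    then have "phi p l (g a) = a" "phi p l (g b) = b"
      using f_the_inv_into_f[OF phi_inj[OF assms(3)]] by (auto simp: g_def case_prod_beta)
    then show "a = b" using e by metis
  qed
  have cardS: "card (g ` (Zp_vecs p l \<times> Z)) = p ^ l * (\<Sum>r=0..m. card (C r))"
    using card_image[OF inj] by (simp add: card_cartesian_product Zp_card cardZ)
  have bound: "real (m choose r) * real (p-1) ^ r / real (2 * max t r) ^ t \<le> real (card (C r))"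
    if r: "r \<in> {0..m}" for r
  proof -
    have rr: "r \<le> n - l" using r by (simp add: m_def)
    have xi: "max t r < \<xi> r" "\<xi> r \<le> 2 * max t r" using assms(5) rr by auto
    have "card (W p m r) \<le> \<xi> r ^ t * card (C r)"
      unfolding C_def using pigeon[of "\<xi> r" "astar r" t p l m r] assms(6) rr xi by (simp add: m_def)
    then have "(m choose r) * (p-1)^r \<le> \<xi> r ^ t * card (C r)"
      using W_card[of p m r] assms(1) by simp
    then have "real ((m choose r) * (p-1)^r) \<le> real (\<xi> r ^ t * card (C r))"
      by (simp only: of_nat_le_iff)
    also have "\<dots> \<le> real ((2 * max t r) ^ t * card (C r))"
    proof -
      have "\<xi> r ^ t \<le> (2 * max t r) ^ t" using xi(2) by (rule power_mono) simp
      then have "\<xi> r ^ t * card (C r) \<le> (2 * max t r) ^ t * card (C r)" by (rule mult_right_mono) simp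
      then show ?thesis by (simp only: of_nat_le_iff)
    qed
    finally have "real (m choose r) * real (p-1) ^ r \<le> real (2 * max t r) ^ t * real (card (C r))"
      by simp
    moreover have "real (2 * max t r) ^ t > 0" using assms(4) by simp
    ultimately show ?thesis by (simp add: divide_le_eq mult.commute)
  qed
  have "real p ^ l * (\<Sum>r=0..n-l. real ((n-l) choose r) * real (p-1) ^ r / real (2 * max t r) ^ t)
      \<le> real p ^ l * (\<Sum>r=0..m. real (card (C r)))"
    unfolding m_def[symmetric]
    by (rule mult_left_mono[OF sum_mono[OF bound]]) simp_all
  also have "\<dots> = real (card (g ` (Zp_vecs p l \<times> Z)))" using cardS by simp
  finally show ?thesis using SZ by (simp add: g_def)
qed

end
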